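(* Let $A=(S,f_c,f_d)$ be a self-similar cellular automaton and suppose $q\in S$ satisfies $f_c(x,q,z)=f_d(x,q,z)=q$ for all $x,z\in S$. Let $c:\mathbb{Z}\to S$ be an initial configuration with $c(j)=q$ for some $j\in\mathbb{Z}$. Then every evolution $s$ of $A$ from $c$ satisfies $s(j,k)=q$ for all $k\ge 0$, and for every $i<j$ and every $k\ge0$ the value $s(i,k)$ is the same for all evolutions $s$ of $A$ from $c$.
   Context: A self-similar cellular automaton is a triple $A=(S,f_c,f_d)$ with $S$ a finite set of states and $f_c,f_d:S^3\to S$. Cells are indexed by $j\in\mathbb{Z}$; cell $j$ has cycles $[k/2^j,(k+1)/2^j)$, and the $k$-th cycle of cell $j$ is identified with the pair $(j,k)$. The automaton is started at time $0$; the set of cycles is $C=\{(i,k): i\in\mathbb{Z},\ k\in\mathbb{Z}_{\ge 0}\}$. Given an initial configuration $c:\mathbb{Z}\to S$, an evolution of $A$ from $c$ is a map $s:C\to S$ with $s(i,0)=c(i)$ for all $i$ and, for all $(i,k)$ with $k\ge1$, $s(i,k)=f_c\big(s(i-1,\lfloor (k-1)/2\rfloor),s(i,k-1),s(i+1,2k-1)\big)$ if $k$ is even and $s(i,k)=f_d(\text{same arguments})$ if $k$ is odd. *)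

theory Defs
  imports Main
begin

definition ssca :: "'a set \<Rightarrow> ('a \<Rightarrow> 'a \<Rightarrow> 'a \<Rightarrow> 'a) \<Rightarrow> ('a \<Rightarrow> 'a \<Rightarrow> 'a \<Rightarrow> 'a) \<Rightarrow> bool" where
  "ssca S fc fd \<longleftrightarrow> finite S \<and>
     (\<forall>x\<in>S. \<forall>y\<in>S. \<forall>z\<in>S. fc x y z \<in> S \<and> fd x y z \<in> S)"

text \<open>An evolution s : C -> S from the initial configuration c, where the cycle
  (i,k) means the k-th cycle of cell i (i integer, k natural).\<close>
definition evolution :: "'a set \<Rightarrow> ('a \<Rightarrow> 'a \<Rightarrow> 'a \<Rightarrow> 'a) \<Rightarrow> ('a \<Rightarrow> 'a \<Rightarrow> 'a \<Rightarrow> 'a)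
    \<Rightarrow> (int \<Rightarrow> 'a) \<Rightarrow> (int \<Rightarrow> nat \<Rightarrow> 'a) \<Rightarrow> bool" where
  "evolution S fc fd c s \<longleftrightarrow>
     (\<forall>i k. s i k \<in> S) \<and>
     (\<forall>i. s i 0 = c i) \<and>
     (\<forall>i k. k \<ge> 1 \<longrightarrow>
        s i k = (if even k then fc else fd)
                  (s (i - 1) ((k - 1) div 2)) (s i (k - 1)) (s (i + 1) (2 * k - 1)))"

end

theory Submission
  imports Defs
begin

lemma evo_step:
  assumes "evolution S fc fd c s" "k \<ge> 1"
  shows "s i k = (if even k then fc else fd)
                  (s (i - 1) ((k - 1) div 2)) (s i (k - 1)) (s (i + 1) (2 * k - 1))"
proof -
  have "\<forall>i k. k \<ge> 1 \<longrightarrow> s i k = (if even k then fc else fd)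
                  (s (i - 1) ((k - 1) div 2)) (s i (k - 1)) (s (i + 1) (2 * k - 1))"
    using assms(1) unfolding evolution_def by blast
  then show ?thesis using assms(2) by blast
qed

lemma evo_init:
  assumes "evolution S fc fd c s"
  shows "s i 0 = c i"
  using assms unfolding evolution_def by blast

lemma fixed_cell:
  assumes "evolution S fc fd c s" "\<forall>x\<in>S. \<forall>z\<in>S. fc x q z = q \<and> fd x q z = q" "c j = q"
  shows "s j k = q"
proof (induction k)
  case 0 then show ?case using evo_init[OF assms(1), of j] assms(3) by simp
next
  case (Suc k)
  have S: "\<And>i k. s i k \<in> S" using assms(1) unfolding evolution_def by blast
  have "s j (Suc k) = (if even (Suc k) then fc else fd)
                  (s (j - 1) ((Suc k - 1) div 2)) (s j (Suc k - 1)) (s (j + 1) (2 * Suc k - 1))"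
    using evo_step[OF assms(1), of "Suc k" j] by simp
  then show ?case using Suc S assms(2) by (simp split: if_splits)
qed

lemma left_det:
  assumes es: "evolution S fc fd c s" and et: "evolution S fc fd c t"
    and fx: "\<forall>x\<in>S. \<forall>z\<in>S. fc x q z = q \<and> fd x q z = q" and cj: "c j = q"
  shows "\<forall>i k. i < j \<longrightarrow> k * 2 ^ nat (j - i) = n \<longrightarrow> s i k = t i k"
proof (induction n rule: less_induct)
  case (less n)
  show ?case
  proof (intro allI impI)
    fix i k assume ij: "i < j" and kn: "k * 2 ^ nat (j - i) = n"
    define N where "N = nat (j - i)"
    have N1: "N \<ge> 1" using ij N_def by simp
    show "s i k = t i k"
    proof (cases "k = 0")
      case True then show ?thesis using evo_init[OF es, of i] evo_init[OF et, of i] by simp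
    next
      case False
      have rs: "s i k = (if even k then fc else fd)
                  (s (i - 1) ((k - 1) div 2)) (s i (k - 1)) (s (i + 1) (2 * k - 1))"
        using evo_step[OF es, of k i] False by simp
      have rt: "t i k = (if even k then fc else fd)
                  (t (i - 1) ((k - 1) div 2)) (t i (k - 1)) (t (i + 1) (2 * k - 1))"
        using evo_step[OF et, of k i] False by simp
      have pN: "(0::nat) < 2 ^ N" by simp
      have kn': "k * 2 ^ N = n" using kn N_def by simp
      have a: "s (i - 1) ((k - 1) div 2) = t (i - 1) ((k - 1) div 2)"
      proof -
        have e: "nat (j - (i - 1)) = Suc N" using N_def ij by simp
        have "((k - 1) div 2) * 2 ^ Suc N = (((k - 1) div 2) * 2) * 2 ^ N" by simp
        also have "\<dots> \<le> (k - 1) * 2 ^ N" by (intro mult_right_mono) auto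
        also have "\<dots> < k * 2 ^ N" using False pN by simp
        finally have "((k - 1) div 2) * 2 ^ nat (j - (i - 1)) < n" using kn' e by simp
        from less.IH[OF this, rule_format, of "i - 1"] ij show ?thesis by simp
      qed
      have b: "s i (k - 1) = t i (k - 1)"
      proof -
        have "(k - 1) * 2 ^ N < k * 2 ^ N" using False pN by simp
        then have "(k - 1) * 2 ^ nat (j - i) < n" using kn' unfolding N_def by linarith
        from less.IH[OF this, rule_format, of i] ij show ?thesis by simp
      qed
      have c: "s (i + 1) (2 * k - 1) = t (i + 1) (2 * k - 1)"
      proof (cases "i + 1 = j")
        case True then show ?thesis using fixed_cell[OF es fx cj] fixed_cell[OF et fx cj] by simp
      next
        case F: False
        then have ij2: "i + 1 < j" using ij by simp
        then have N2: "N \<ge> 2" using N_def by simp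
        have e: "nat (j - (i + 1)) = N - 1" using N_def ij2 by simp
        have "(2 * k - 1) * 2 ^ (N - 1) < (2 * k) * 2 ^ (N - 1)"
          using False by simp
        also have "\<dots> = k * 2 ^ N" using N1
          by (cases N) auto
        finally have "(2 * k - 1) * 2 ^ nat (j - (i + 1)) < n" using kn' e by simp
        from less.IH[OF this, rule_format, of "i + 1"] ij2 show ?thesis by simp
      qed
      show ?thesis unfolding rs rt a b c by (rule refl)
    qed
  qed
qed

theorem mainTheorem3:
  fixes S :: "'a set" and fc fd :: "'a \<Rightarrow> 'a \<Rightarrow> 'a \<Rightarrow> 'a"
    and q :: 'a and c :: "int \<Rightarrow> 'a" and j :: int
  assumes "ssca S fc fd"
    and "q \<in> S"
    and "\<forall>x\<in>S. \<forall>z\<in>S. fc x q z = q \<and> fd x q z = q"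
    and "\<forall>i. c i \<in> S"
    and "c j = q"
  shows "(\<forall>s. evolution S fc fd c s \<longrightarrow> (\<forall>k. s j k = q)) \<and>
         (\<forall>s t i k. evolution S fc fd c s \<longrightarrow> evolution S fc fd c t \<longrightarrow> i < j
              \<longrightarrow> s i k = t i k)"
proof (intro conjI allI impI)
  fix s k assume "evolution S fc fd c s" then show "s j k = q" using fixed_cell[of S fc fd c s q j k] assms(3,5) by blast
next
  fix s t i k assume "evolution S fc fd c s" "evolution S fc fd c t" "i < j"
  then show "s i k = t i k"
    using left_det[of S fc fd c s t q j "k * 2 ^ nat (j - i)"] assms(3,5) by blast
qed

end
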